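(* The function $(a,s,d)\mapsto\bar\sigma_a(s,d)$ on $[0,1]\times(0,\infty)\times\mathbb Z_+$ is strictly decreasing in each of $a$, $s$ and $d$ when the other two variables are held fixed.
   Context: For $a\in[0,1]$ let $\phi_a:\mathbb R\to\mathbb R$ be $\phi_a(z)=z$ for $z>0$ and $\phi_a(z)=az$ for $z\le0$, applied componentwise to vectors. For an integer $d\ge1$ and real $s>0$, let $I_a(s,d)=\mathbb E\|\phi_a(Z)\|^s$ where $Z\sim\mathcal N(0,I_d)$ and $\|\cdot\|$ is the Euclidean norm, and let $\bar\sigma_a(s,d)=I_a(s,d)^{-1/s}$ (the critical weight standard deviation at which a zero-bias width-$d$ network $x^{(k+1)}=\phi_a(W^{(k+1)}x^{(k)})$ with i.i.d. $\mathcal N(0,\sigma^2)$ weights satisfies $\mathbb E\|x^{(k)}\|^s=\|x^{(0)}\|^s$ for all $k$). *)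

theory Defs
  imports "HOL-Probability.Probability"
begin

definition phi :: "real \<Rightarrow> real \<Rightarrow> real" where
  "phi a z = (if z > 0 then z else a * z)"

text \<open>Standard Gaussian measure on R^d, vectors represented as functions on {..<d}.\<close>
definition gauss :: "nat \<Rightarrow> (nat \<Rightarrow> real) measure" where
  "gauss d = PiM {..<d} (\<lambda>_. density lborel std_normal_density)"

definition phinorm :: "real \<Rightarrow> nat \<Rightarrow> (nat \<Rightarrow> real) \<Rightarrow> real" where
  "phinorm a d z = sqrt (\<Sum>i<d. (phi a (z i))\<^sup>2)"

definition Ia :: "real \<Rightarrow> real \<Rightarrow> nat \<Rightarrow> real" where
  "Ia a s d = (\<integral>z. (phinorm a d z) powr s \<partial>(gauss d))"

definition sigma_bar :: "real \<Rightarrow> real \<Rightarrow> nat \<Rightarrow> real" where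
  "sigma_bar a s d = (Ia a s d) powr (- 1 / s)"

end

theory Submission imports Defs begin
abbreviation "NN \<equiv> density lborel std_normal_density"

lemma NN_prob: "prob_space NN"
  using prob_space_normal_density[of 1 0] by simp

lemma gauss_prob: "prob_space (gauss d)"
  unfolding gauss_def by (rule prob_space_PiM) (rule NN_prob)

lemma sets_NN[measurable_cong]: "sets NN = sets borel" by simp

lemma gauss_comp: "i < d \<Longrightarrow> distr (gauss d) NN (\<lambda>z. z i) = NN"
  unfolding gauss_def by (rule distr_PiM_component) (auto intro: NN_prob)

lemma meas_comp: "i < d \<Longrightarrow> (\<lambda>z. z i) \<in> gauss d \<rightarrow>\<^sub>M NN"
  unfolding gauss_def by (rule measurable_component_singleton) auto

lemma meas_comp': "i < d \<Longrightarrow> (\<lambda>z. z i) \<in> borel_measurable (gauss d)"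
  using meas_comp[of i d] measurable_cong_sets[OF refl sets_NN] by blast

lemma phi_meas[measurable]: "(\<lambda>x. phi a x) \<in> borel_measurable borel"
  unfolding phi_def by measurable

lemma phinorm_meas[measurable]: "d \<le> d' \<Longrightarrow> (\<lambda>z. phinorm a d z) \<in> borel_measurable (gauss d')"
  unfolding phinorm_def gauss_def by measurable

lemma integrable_comp:
  fixes f :: "real \<Rightarrow> real"
  assumes "i < d" "integrable NN f" "f \<in> borel_measurable borel"
  shows "integrable (gauss d) (\<lambda>z. f (z i))"
proof -
  have "integrable (distr (gauss d) NN (\<lambda>z. z i)) f" using gauss_comp[OF assms(1)] assms(2) by simp
  moreover have fm: "f \<in> borel_measurable NN" using assms(3) using measurable_cong_sets[OF sets_NN refl, of borel] by blast
  ultimately show ?thesis using integrable_distr_eq[OF meas_comp[OF assms(1)] fm] by simp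
qed

lemma integrable_NN_abs_pow: "integrable NN (\<lambda>x. \<bar>x\<bar>^k)"
  by (subst integrable_density) (auto simp: integrable_std_normal_moment_abs)

lemma NN_interval_pos:
  assumes "c < e" shows "emeasure NN {c<..<e} \<noteq> 0"
proof
  assume "emeasure NN {c<..<e} = 0"
  then have "{c<..<e} \<in> null_sets NN" by auto
  then have "AE x\<in>{c<..<e} in lborel. ennreal (std_normal_density x) = 0"
    by (subst (asm) null_sets_density_iff) auto
  then have "AE x in lborel. x \<notin> {c<..<e}"
    by eventually_elim (metis ennreal_eq_0_iff normal_density_pos zero_less_one not_le)
  then have "{c<..<e} \<in> null_sets lborel"
    by (subst AE_iff_null_sets) auto
  with assms show False by auto
qed

lemma gauss_interval_pos:
  assumes "i < d" "c < e"
  shows "emeasure (gauss d) {z \<in> space (gauss d). c < z i \<and> z i < e} \<noteq> 0"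
proof -
  have "emeasure (distr (gauss d) NN (\<lambda>z. z i)) {c<..<e} \<noteq> 0"
    using gauss_comp[OF assms(1)] NN_interval_pos[OF assms(2)] by simp
  moreover have "emeasure (distr (gauss d) NN (\<lambda>z. z i)) {c<..<e}
      = emeasure (gauss d) ((\<lambda>z. z i) -` {c<..<e} \<inter> space (gauss d))"
    using assms by (intro emeasure_distr meas_comp) auto
  moreover have "(\<lambda>z. z i) -` {c<..<e} \<inter> space (gauss d) = {z \<in> space (gauss d). c < z i \<and> z i < e}"
    by auto
  ultimately show ?thesis by simp
qed

lemma powr_le_1_pow:
  fixes x s :: real assumes "0 \<le> x" "0 < s"
  shows "x powr s \<le> 1 + x ^ nat \<lceil>s\<rceil>"
proof (cases "x \<le> 1")
  case True
  then have "x powr s \<le> 1" using assms powr_mono2[of s x 1] by simp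
  then show ?thesis using assms by (smt (verit) zero_le_power)
next
  case False
  then have "x powr s \<le> x powr (real (nat \<lceil>s\<rceil>))"
    by (intro powr_mono) (auto, linarith)
  also have "\<dots> = x ^ nat \<lceil>s\<rceil>" using False by (simp add: powr_realpow)
  finally show ?thesis by simp
qed

lemma phi_sq_le: "0 \<le> a \<Longrightarrow> a \<le> 1 \<Longrightarrow> (phi a x)\<^sup>2 \<le> x\<^sup>2"
  unfolding phi_def
  by (auto simp: power_mult_distrib) (smt (verit, best) mult_left_le_one_le power2_eq_square zero_le_power2)

lemma phinorm_nonneg: "0 \<le> phinorm a d z"
  unfolding phinorm_def by (intro real_sqrt_ge_zero sum_nonneg) auto

lemma phinorm_bound:
  assumes "0 \<le> a" "a \<le> 1" "0 < s" "0 < d"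
  shows "phinorm a d z powr s \<le> sqrt d powr s * (1 + (\<Sum>i<d. \<bar>z i\<bar> ^ nat \<lceil>s\<rceil>))"
proof -
  define M where "M = Max ((\<lambda>i. \<bar>z i\<bar>) ` {..<d})"
  have fin: "finite ((\<lambda>i. \<bar>z i\<bar>) ` {..<d})" "(\<lambda>i. \<bar>z i\<bar>) ` {..<d} \<noteq> {}"
    using assms by auto
  obtain j where j: "j < d" "M = \<bar>z j\<bar>"
    using Max_in[OF fin] unfolding M_def by auto
  have Mge: "\<bar>z i\<bar> \<le> M" if "i < d" for i
    unfolding M_def using fin that by (intro Max_ge) auto
  have M0: "0 \<le> M" using j by simp
  have "(\<Sum>i<d. (phi a (z i))\<^sup>2) \<le> (\<Sum>i<d. M\<^sup>2)"
  proof (rule sum_mono)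
    fix i assume "i \<in> {..<d}"
    then have "\<bar>z i\<bar> \<le> M" using Mge by auto
    then have "(z i)\<^sup>2 \<le> M\<^sup>2" by (metis abs_le_square_iff abs_of_nonneg M0)
    then show "(phi a (z i))\<^sup>2 \<le> M\<^sup>2" using phi_sq_le[OF assms(1,2)] order_trans by blast
  qed
  then have "phinorm a d z \<le> sqrt (d * M\<^sup>2)" unfolding phinorm_def by (simp add: real_sqrt_le_mono)
  also have "\<dots> = sqrt d * M" using M0 by (simp add: real_sqrt_mult)
  finally have "phinorm a d z powr s \<le> (sqrt d * M) powr s"
    using assms by (intro powr_mono2) (auto simp: phinorm_nonneg)
  also have "\<dots> = sqrt d powr s * M powr s" using M0 by (simp add: powr_mult)
  also have "\<dots> \<le> sqrt d powr s * (1 + M ^ nat \<lceil>s\<rceil>)"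
    using powr_le_1_pow[OF M0 assms(3)] by (intro mult_left_mono) auto
  also have "M ^ nat \<lceil>s\<rceil> \<le> (\<Sum>i<d. \<bar>z i\<bar> ^ nat \<lceil>s\<rceil>)"
    unfolding j(2) by (rule member_le_sum) (use j in auto)
  then have "sqrt d powr s * (1 + M ^ nat \<lceil>s\<rceil>) \<le> sqrt d powr s * (1 + (\<Sum>i<d. \<bar>z i\<bar> ^ nat \<lceil>s\<rceil>))"
    by (intro mult_left_mono) auto
  finally show ?thesis .
qed

lemma integrable_pn:
  assumes "0 \<le> a" "a \<le> 1" "0 < s" "d \<le> d'"
  shows "integrable (gauss d') (\<lambda>z. phinorm a d z powr s)"
proof (cases "d = 0")
  case True
  then show ?thesis by (simp add: phinorm_def)
next
  case False
  interpret prob_space "gauss d'" by (rule gauss_prob)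
  have si: "integrable (gauss d') (\<lambda>z. (\<Sum>i<d. \<bar>z i\<bar> ^ nat \<lceil>s\<rceil>))"
  proof (rule Bochner_Integration.integrable_sum)
    fix i assume "i \<in> {..<d}"
    then show "integrable (gauss d') (\<lambda>z. \<bar>z i\<bar> ^ nat \<lceil>s\<rceil>)"
      using integrable_comp[of i d' "\<lambda>x. \<bar>x\<bar> ^ nat \<lceil>s\<rceil>"] assms integrable_NN_abs_pow by auto
  qed
  have "integrable (gauss d') (\<lambda>z. 1 + (\<Sum>i<d. \<bar>z i\<bar> ^ nat \<lceil>s\<rceil>))"
    by (rule Bochner_Integration.integrable_add[OF _ si]) simp
  then have "integrable (gauss d') (\<lambda>z. sqrt d powr s * (1 + (\<Sum>i<d. \<bar>z i\<bar> ^ nat \<lceil>s\<rceil>)))"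
    by (intro integrable_mult_right)
  then show ?thesis
  proof (rule Bochner_Integration.integrable_bound)
    show "(\<lambda>z. phinorm a d z powr s) \<in> borel_measurable (gauss d')" using assms by measurable
    show "AE z in gauss d'. norm (phinorm a d z powr s) \<le> norm (sqrt d powr s * (1 + (\<Sum>i<d. \<bar>z i\<bar> ^ nat \<lceil>s\<rceil>)))"
      using phinorm_bound[of a s d] assms False by (intro AE_I2) (auto simp: sum_nonneg)
  qed
qed

lemma sets_comp_interval:
  assumes "i < d" shows "{z \<in> space (gauss d). c < z i \<and> z i < e} \<in> sets (gauss d)"
proof -
  have "{z \<in> space (gauss d). c < z i \<and> z i < e} = (\<lambda>z. z i) -` {c<..<e} \<inter> space (gauss d)" by auto
  also have "\<dots> \<in> sets (gauss d)" using meas_comp'[OF assms] by (rule measurable_sets) auto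
  finally show ?thesis .
qed

lemma phinorm_ge_comp: "i < d \<Longrightarrow> \<bar>phi a (z i)\<bar> \<le> phinorm a d z"
proof -
  assume "i < d"
  then have "(phi a (z i))\<^sup>2 \<le> (\<Sum>j<d. (phi a (z j))\<^sup>2)"
    by (intro member_le_sum[of i "{..<d}" "\<lambda>j. (phi a (z j))\<^sup>2"]) auto
  then have "sqrt ((phi a (z i))\<^sup>2) \<le> phinorm a d z" unfolding phinorm_def by (rule real_sqrt_le_mono)
  then show ?thesis by simp
qed

lemma Ia_pos:
  assumes "0 \<le> a" "a \<le> 1" "0 < s" "1 \<le> d"
  shows "0 < Ia a s d"
proof -
  interpret prob_space "gauss d" by (rule gauss_prob)
  let ?A = "{z \<in> space (gauss d). 0 < z 0 \<and> z 0 < 1}"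
  have "integral\<^sup>L (gauss d) (\<lambda>z. 0) < integral\<^sup>L (gauss d) (\<lambda>z. phinorm a d z powr s)"
  proof (rule integral_less_AE[where A = ?A])
    show "integrable (gauss d) (\<lambda>z. phinorm a d z powr s)" using assms by (intro integrable_pn) auto
    show "emeasure (gauss d) ?A \<noteq> 0" using assms by (intro gauss_interval_pos) auto
    show "?A \<in> sets (gauss d)" using assms by (intro sets_comp_interval) auto
    show "AE x in gauss d. x \<in> ?A \<longrightarrow> 0 \<noteq> phinorm a d x powr s"
    proof (intro AE_I2 impI)
      fix z assume "z \<in> ?A"
      then have "0 < \<bar>phi a (z 0)\<bar>" by (simp add: phi_def)
      also have "\<dots> \<le> phinorm a d z" using assms by (intro phinorm_ge_comp) auto
      finally show "0 \<noteq> phinorm a d z powr s" by simp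
    qed
    show "AE x in gauss d. 0 \<le> phinorm a d x powr s" by simp
  qed simp
  then show ?thesis by (simp add: Ia_def)
qed

lemma phi_sq_mono:
  assumes "0 \<le> a1" "a1 \<le> a2"
  shows "(phi a1 x)\<^sup>2 \<le> (phi a2 x)\<^sup>2" "x < 0 \<Longrightarrow> a1 < a2 \<Longrightarrow> (phi a1 x)\<^sup>2 < (phi a2 x)\<^sup>2"
  using assms unfolding phi_def
  by (auto simp: power_mult_distrib intro!: mult_right_mono power_mono mult_strict_right_mono power_strict_mono)

lemma Ia_mono_a:
  assumes "0 \<le> a1" "a1 < a2" "a2 \<le> 1" "0 < s" "1 \<le> d"
  shows "Ia a1 s d < Ia a2 s d"
proof -
  interpret prob_space "gauss d" by (rule gauss_prob)
  let ?A = "{z \<in> space (gauss d). -1 < z 0 \<and> z 0 < 0}"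
  have le: "phinorm a1 d z \<le> phinorm a2 d z" for z
    unfolding phinorm_def using assms by (intro real_sqrt_le_mono sum_mono phi_sq_mono) auto
  show ?thesis unfolding Ia_def
  proof (rule integral_less_AE[where A = ?A])
    show "integrable (gauss d) (\<lambda>z. phinorm a1 d z powr s)" using assms by (intro integrable_pn) auto
    show "integrable (gauss d) (\<lambda>z. phinorm a2 d z powr s)" using assms by (intro integrable_pn) auto
    show "emeasure (gauss d) ?A \<noteq> 0" using assms by (intro gauss_interval_pos) auto
    show "?A \<in> sets (gauss d)" using assms by (intro sets_comp_interval) auto
    show "AE x in gauss d. x \<in> ?A \<longrightarrow> phinorm a1 d x powr s \<noteq> phinorm a2 d x powr s"
    proof (intro AE_I2 impI)
      fix z assume z: "z \<in> ?A"
      have "(\<Sum>i<d. (phi a1 (z i))\<^sup>2) < (\<Sum>i<d. (phi a2 (z i))\<^sup>2)"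
        using assms z by (intro sum_strict_mono_ex1 bexI[of _ 0] ballI phi_sq_mono) auto
      then have "phinorm a1 d z < phinorm a2 d z" unfolding phinorm_def by simp
      then have "phinorm a1 d z powr s < phinorm a2 d z powr s"
        using assms by (intro powr_less_mono2) (auto simp: phinorm_nonneg)
      then show "phinorm a1 d z powr s \<noteq> phinorm a2 d z powr s" by simp
    qed
    show "AE x in gauss d. phinorm a1 d x powr s \<le> phinorm a2 d x powr s"
      using assms le by (intro AE_I2 powr_mono2) (auto simp: phinorm_nonneg)
  qed
qed

lemma NN_product: "product_prob_space (\<lambda>_::nat. NN)"
  by (simp add: product_prob_space_def product_prob_space_axioms_def product_sigma_finite_def
      NN_prob prob_space_imp_sigma_finite)

lemma Ia_restrict:
  assumes "0 \<le> a" "a \<le> 1" "0 < s" "d1 \<le> d2"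
  shows "Ia a s d1 = integral\<^sup>L (gauss d2) (\<lambda>z. phinorm a d1 z powr s)"
proof -
  interpret product_prob_space "\<lambda>_::nat. NN" by (rule NN_product)
  have eq: "gauss d1 = distr (gauss d2) (gauss d1) (\<lambda>f. restrict f {..<d1})"
    unfolding gauss_def using assms by (intro distr_restrict) auto
  have "Ia a s d1 = integral\<^sup>L (distr (gauss d2) (gauss d1) (\<lambda>f. restrict f {..<d1})) (\<lambda>z. phinorm a d1 z powr s)"
    unfolding Ia_def by (subst eq[symmetric]) simp
  also have "\<dots> = integral\<^sup>L (gauss d2) (\<lambda>z. phinorm a d1 (restrict z {..<d1}) powr s)"
  proof (rule integral_distr)
    show "(\<lambda>f. restrict f {..<d1}) \<in> gauss d2 \<rightarrow>\<^sub>M gauss d1"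
      unfolding gauss_def using assms by (intro measurable_restrict_subset) auto
    show "(\<lambda>z. phinorm a d1 z powr s) \<in> borel_measurable (gauss d1)" by measurable
  qed
  also have "\<dots> = integral\<^sup>L (gauss d2) (\<lambda>z. phinorm a d1 z powr s)"
    by (simp add: phinorm_def)
  finally show ?thesis .
qed

lemma Ia_mono_d:
  assumes "0 \<le> a" "a \<le> 1" "0 < s" "1 \<le> d1" "d1 < d2"
  shows "Ia a s d1 < Ia a s d2"
proof -
  interpret prob_space "gauss d2" by (rule gauss_prob)
  let ?A = "{z \<in> space (gauss d2). 0 < z d1 \<and> z d1 < 1}"
  have sumeq: "(\<Sum>i<d1. (phi a (z i))\<^sup>2) = (\<Sum>i<d2. if i < d1 then (phi a (z i))\<^sup>2 else 0)" for z
    using assms by (intro sum.mono_neutral_cong_left) auto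
  have le: "phinorm a d1 z \<le> phinorm a d2 z" for z
    unfolding phinorm_def sumeq by (intro real_sqrt_le_mono sum_mono) auto
  have "Ia a s d1 = integral\<^sup>L (gauss d2) (\<lambda>z. phinorm a d1 z powr s)"
    using assms by (intro Ia_restrict) auto
  also have "\<dots> < Ia a s d2" unfolding Ia_def
  proof (rule integral_less_AE[where A = ?A])
    show "integrable (gauss d2) (\<lambda>z. phinorm a d1 z powr s)" using assms by (intro integrable_pn) auto
    show "integrable (gauss d2) (\<lambda>z. phinorm a d2 z powr s)" using assms by (intro integrable_pn) auto
    show "emeasure (gauss d2) ?A \<noteq> 0" using assms by (intro gauss_interval_pos) auto
    show "?A \<in> sets (gauss d2)" using assms by (intro sets_comp_interval) auto
    show "AE x in gauss d2. x \<in> ?A \<longrightarrow> phinorm a d1 x powr s \<noteq> phinorm a d2 x powr s"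
    proof (intro AE_I2 impI)
      fix z assume z: "z \<in> ?A"
      have "(\<Sum>i<d2. if i < d1 then (phi a (z i))\<^sup>2 else 0) < (\<Sum>i<d2. (phi a (z i))\<^sup>2)"
        using assms z by (intro sum_strict_mono_ex1 bexI[of _ d1] ballI) (auto simp: phi_def)
      then have "phinorm a d1 z < phinorm a d2 z" unfolding phinorm_def sumeq by simp
      then have "phinorm a d1 z powr s < phinorm a d2 z powr s"
        using assms by (intro powr_less_mono2) (auto simp: phinorm_nonneg)
      then show "phinorm a d1 z powr s \<noteq> phinorm a d2 z powr s" by simp
    qed
    show "AE x in gauss d2. phinorm a d1 x powr s \<le> phinorm a d2 x powr s"
      using assms le by (intro AE_I2 powr_mono2) (auto simp: phinorm_nonneg)
  qed
  finally show ?thesis .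
qed

lemma tangent_strict:
  fixes p m y :: real
  assumes p: "1 < p" and m: "0 < m" and y: "0 \<le> y" "y \<noteq> m"
  shows "m powr p + p * m powr (p - 1) * (y - m) < y powr p"
proof -
  have D: "\<And>x. 0 < x \<Longrightarrow> ((\<lambda>z. z powr p) has_real_derivative p * x powr (p - 1)) (at x)"
    by (rule has_real_derivative_powr)
  have mp0: "m powr (p - 1) * m powr 1 = m powr (p - 1 + 1)" by (rule powr_add[symmetric])
  have mp: "m powr (p - 1) * m = m powr p" using mp0 m by simp
  show ?thesis
  proof (cases "y = 0")
    case True
    have "m powr p + p * m powr (p - 1) * (y - m) = (1 - p) * m powr p"
      using True mp by (simp add: algebra_simps)
    also have "\<dots> < 0" using p m by (intro mult_neg_pos) auto
    finally show ?thesis using True by simp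
  next
    case False
    then have y0: "0 < y" using y by auto
    show ?thesis
    proof (cases "m < y")
      case True
      obtain \<xi> where xi: "m < \<xi>" "\<xi> < y" "y powr p - m powr p = (y - m) * (p * \<xi> powr (p - 1))"
        using MVT2[OF True, of "\<lambda>z. z powr p" "\<lambda>x. p * x powr (p - 1)"] D m by force
      have "m powr (p - 1) < \<xi> powr (p - 1)" using xi m p by (intro powr_less_mono2) auto
      then have "p * m powr (p - 1) * (y - m) < (y - m) * (p * \<xi> powr (p - 1))"
        using True p by (simp add: mult.commute mult.left_commute)
      then show ?thesis using xi by linarith
    next
      case False
      then have ym: "y < m" using y by auto
      obtain \<xi> where xi: "y < \<xi>" "\<xi> < m" "m powr p - y powr p = (m - y) * (p * \<xi> powr (p - 1))"
        using MVT2[OF ym, of "\<lambda>z. z powr p" "\<lambda>x. p * x powr (p - 1)"] D y0 by force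
      have "\<xi> powr (p - 1) < m powr (p - 1)" using xi y0 p by (intro powr_less_mono2) auto
      then have "(m - y) * (p * \<xi> powr (p - 1)) < p * m powr (p - 1) * (m - y)"
        using ym p by (simp add: mult.commute mult.left_commute)
      then show ?thesis using xi by (simp add: algebra_simps)
    qed
  qed
qed

lemma tangent_le:
  fixes p m y :: real
  assumes p: "1 < p" and m: "0 < m" and y: "0 \<le> y"
  shows "m powr p + p * m powr (p - 1) * (y - m) \<le> y powr p"
  using tangent_strict[OF assms] by (cases "y = m") auto

lemma Ia_mono_s:
  assumes "0 \<le> a" "a \<le> 1" "0 < s1" "s1 < s2" "1 \<le> d"
  shows "Ia a s1 d powr (s2 / s1) < Ia a s2 d"
proof -
  interpret prob_space "gauss d" by (rule gauss_prob)
  define m where "m = Ia a s1 d"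
  define p where "p = s2 / s1"
  define c where "c = m powr (1 / s1)"
  have m0: "0 < m" unfolding m_def using assms by (intro Ia_pos) auto
  have p1: "1 < p" unfolding p_def using assms by simp
  have c0: "0 < c" unfolding c_def using m0 by simp
  have Y: "(phinorm a d z powr s1) powr p = phinorm a d z powr s2" for z
    unfolding p_def using assms by (simp add: powr_powr)
  let ?A = "{z \<in> space (gauss d). c < z 0 \<and> z 0 < c + 1}"
  have int1: "integrable (gauss d) (\<lambda>z. phinorm a d z powr s1)" using assms by (intro integrable_pn) auto
  have int2: "integrable (gauss d) (\<lambda>z. phinorm a d z powr s2)" using assms by (intro integrable_pn) auto
  have intX: "integrable (gauss d) (\<lambda>z. m powr p + p * m powr (p - 1) * (phinorm a d z powr s1 - m))"
    using int1 by simp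
  have "integral\<^sup>L (gauss d) (\<lambda>z. m powr p + p * m powr (p - 1) * (phinorm a d z powr s1 - m)) = m powr p"
    using int1 by (simp add: m_def Ia_def prob_space)
  moreover have "integral\<^sup>L (gauss d) (\<lambda>z. m powr p + p * m powr (p - 1) * (phinorm a d z powr s1 - m))
      < integral\<^sup>L (gauss d) (\<lambda>z. phinorm a d z powr s2)"
  proof (rule integral_less_AE[where A = ?A, OF intX int2])
    show "emeasure (gauss d) ?A \<noteq> 0" using assms by (intro gauss_interval_pos) auto
    show "?A \<in> sets (gauss d)" using assms by (intro sets_comp_interval) auto
    show "AE x in gauss d. x \<in> ?A \<longrightarrow> m powr p + p * m powr (p - 1) * (phinorm a d x powr s1 - m) \<noteq> phinorm a d x powr s2"
    proof (intro AE_I2 impI)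
      fix z assume z: "z \<in> ?A"
      then have "c < \<bar>phi a (z 0)\<bar>" using c0 by (simp add: phi_def)
      also have "\<dots> \<le> phinorm a d z" using assms by (intro phinorm_ge_comp) auto
      finally have "c powr s1 < phinorm a d z powr s1" using c0 assms by (intro powr_less_mono2) auto
      moreover have "c powr s1 = m" unfolding c_def using m0 assms by (simp add: powr_powr)
      ultimately have "phinorm a d z powr s1 \<noteq> m" by simp
      from tangent_strict[OF p1 m0 _ this] show "m powr p + p * m powr (p - 1) * (phinorm a d z powr s1 - m) \<noteq> phinorm a d z powr s2"
        using Y[of z] by simp
    qed
    show "AE x in gauss d. m powr p + p * m powr (p - 1) * (phinorm a d x powr s1 - m) \<le> phinorm a d x powr s2"
      using tangent_le[OF p1 m0] Y by (intro AE_I2) (metis powr_ge_zero)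
  qed
  ultimately show ?thesis by (simp add: m_def p_def Ia_def)
qed

theorem mainTheorem6:
  shows "(\<forall>a1 a2 s d. 0 \<le> a1 \<and> a1 < a2 \<and> a2 \<le> 1 \<and> 0 < s \<and> 1 \<le> d
            \<longrightarrow> sigma_bar a2 s d < sigma_bar a1 s d)
       \<and> (\<forall>a s1 s2 d. 0 \<le> a \<and> a \<le> 1 \<and> 0 < s1 \<and> s1 < s2 \<and> 1 \<le> d
            \<longrightarrow> sigma_bar a s2 d < sigma_bar a s1 d)
       \<and> (\<forall>a s d1 d2. 0 \<le> a \<and> a \<le> 1 \<and> 0 < s \<and> 1 \<le> d1 \<and> d1 < d2
            \<longrightarrow> sigma_bar a s d2 < sigma_bar a s d1)"
proof (intro conjI allI impI)
  fix a1 a2 s :: real and d :: nat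
  assume h: "0 \<le> a1 \<and> a1 < a2 \<and> a2 \<le> 1 \<and> 0 < s \<and> 1 \<le> d"
  have "0 < Ia a1 s d" using h by (intro Ia_pos) auto
  moreover have "Ia a1 s d < Ia a2 s d" using h by (intro Ia_mono_a) auto
  ultimately show "sigma_bar a2 s d < sigma_bar a1 s d"
    unfolding sigma_bar_def using h by (intro powr_less_mono2_neg) (auto simp: divide_neg_pos)
next
  fix a s1 s2 :: real and d :: nat
  assume h: "0 \<le> a \<and> a \<le> 1 \<and> 0 < s1 \<and> s1 < s2 \<and> 1 \<le> d"
  have p: "0 < Ia a s1 d" using h by (intro Ia_pos) auto
  have lt: "Ia a s1 d powr (s2 / s1) < Ia a s2 d" using h by (intro Ia_mono_s) auto
  have "sigma_bar a s1 d = (Ia a s1 d powr (s2 / s1)) powr (- 1 / s2)"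
    unfolding sigma_bar_def using h by (simp add: powr_powr)
  moreover have "Ia a s2 d powr (- 1 / s2) < (Ia a s1 d powr (s2 / s1)) powr (- 1 / s2)"
    using p lt h by (intro powr_less_mono2_neg) auto
  ultimately show "sigma_bar a s2 d < sigma_bar a s1 d" unfolding sigma_bar_def by simp
next
  fix a s :: real and d1 d2 :: nat
  assume h: "0 \<le> a \<and> a \<le> 1 \<and> 0 < s \<and> 1 \<le> d1 \<and> d1 < d2"
  have "0 < Ia a s d1" using h by (intro Ia_pos) auto
  moreover have "Ia a s d1 < Ia a s d2" using h by (intro Ia_mono_d) auto
  ultimately show "sigma_bar a s d2 < sigma_bar a s d1"
    unfolding sigma_bar_def using h by (intro powr_less_mono2_neg) auto
qed
end
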